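(* Let $m\in\mathbb{N}$, let $f_0,\dots,f_m\in\mathbb{C}[[z]]$ be in general position, let $n\ge m-1$, and write $n=m-1+(m+1)k+\ell$ with $\ell\in\{0,\dots,m\}$, $k\in\{0,1,2,\dots\}$. Put $Q_{\mathbf{k}^{[n]},j}:=A_{m+1,m+1-j}^{[n]}$, $j=0,\dots,m$. 1) If $\ell=0$, then $\deg A_{m+1,s}^{[n]}=k$ for all $s=1,\dots,m+1$, and $(Q_{\mathbf{k}^{[n]},0},\dots,Q_{\mathbf{k}^{[n]},m})$ is a tuple of Hermite–Padé polynomials of type I for $[f_0,\dots,f_m]$ and the multiindex $\mathbf{k}^{[n]}=(k,\dots,k)$, with order of tangency $(m+1)k+m=n+1$, i.e. $\sum_{j=0}^mQ_{\mathbf{k}^{[n]},j}f_j=O(z^{n+1})$. 2) If $\ell\in\{1,\dots,m\}$, then $\deg A_{m+1,m+1-s}^{[n]}=k+1$ for $s=0,\dots,\ell-1$ and $\deg A_{m+1,m+1-s}^{[n]}=k$ for $s=\ell,\dots,m$, and $(Q_{\mathbf{k}^{[n]},0},\dots,Q_{\mathbf{k}^{[n]},m})$ is a tuple of Hermite–Padé polynomials of type I for $[f_0,\dots,f_m]$ and the multiindex $\mathbf{k}^{[n]}=(\underbrace{k+1,\dots,k+1}_{\ell},\underbrace{k,\dots,k}_{m+1-\ell})$, with order of tangency $|\mathbf{k}^{[n]}|+m=(m+1)k+m+\ell=n+1$, i.e. $\sum_{j=0}^mQ_{\mathbf{k}^{[n]},j}f_j=O(z^{n+1})$. In both cases $\mathbf{k}^{[n]}=(k_0,\dots,k_m)$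 with $k_j=\deg A_{m+1,m+1-j}^{[n]}$ and $|\mathbf{k}^{[n]}|+m=n+1$.
   Context: For $g\in\mathbb{C}[[z]]$, $g=O(z^N)$ means the coefficients of $z^0,\dots,z^{N-1}$ vanish. For $\mathbf{k}=(k_0,\dots,k_m)\in\mathbb{Z}_+^{m+1}$, $|\mathbf{k}|=\sum k_j$, a tuple of polynomials $(Q_0,\dots,Q_m)$, not all zero, with $\deg Q_j\le k_j$ and $\sum_jQ_jf_j=O(z^{|\mathbf{k}|+m})$ is a tuple of Hermite–Padé polynomials of type I for $[f_0,\dots,f_m]$ and $\mathbf{k}$ ($|\mathbf{k}|+m$ is the order of tangency). Construction: put $f_j^{[0]}:=f_j$, $j=0,\dots,m$. Recursively for $n\ge0$: let $c_j^{[n]}$ be the constant term of $f_j^{[n]}$; $a_j^{[n]}:=-c_j^{[n]}/c_{j-1}^{[n]}$ ($j=1,\dots,m$); $f_m^{[n+1]}:=f_0^{[n]}$, $f_j^{[n+1]}:=z^{-1}(f_{j+1}^{[n]}+a_{j+1}^{[n]}f_j^{[n]})$ ($j=0,\dots,m-1$). $M^{[n]}$ is the $(m+1)\times(m+1)$ polynomial matrix whose first row is $(0,\dots,0,z)$ and whose $i$-th row, $i=2,\dots,m+1$, has $1$ in column $i-1$, $a_{m+2-i}^{[n]}$ in column $i$, zeros elsewhere; $A^{[n]}:=M^{[n]}\cdots M^{[0]}$ with entries $A_{i,s}^{[n]}\in\mathbb{C}[z]$. General position: all $c_j^{[n]}\neq0$, and for every $n\ge0$ and every entry of $A^{[n+1]}=M^{[n+1]}A^{[n]}$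 (a sum of at most two products of an entry of $M^{[n+1]}$ and an entry of $A^{[n]}$), the degree of the entry equals the maximum of the degrees of these products (zero polynomial has degree $-\infty$). *)

theory Defs
  imports "HOL-Computational_Algebra.Computational_Algebra"
          "HOL-Computational_Algebra.Polynomial_FPS"
          "HOL-Library.Extended_Real"
begin

definition pdeg :: "complex poly \<Rightarrow> ereal" where
  "pdeg p = (if p = 0 then -\<infinity> else ereal (real (degree p)))"

definition bigO_z :: "complex fps \<Rightarrow> nat \<Rightarrow> bool" where
  "bigO_z g N = (\<forall>i<N. fps_nth g i = 0)"

definition hp_typeI :: "nat \<Rightarrow> (nat \<Rightarrow> complex fps) \<Rightarrow> (nat \<Rightarrow> nat) \<Rightarrow> (nat \<Rightarrow> complex poly) \<Rightarrow> bool" where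
  "hp_typeI m f kk Q =
     ((\<exists>j\<le>m. Q j \<noteq> 0) \<and> (\<forall>j\<le>m. degree (Q j) \<le> kk j) \<and>
      bigO_z (\<Sum>j\<le>m. fps_of_poly (Q j) * f j) ((\<Sum>j\<le>m. kk j) + m))"

text \<open>The functions f_j^[n] (indices j = 0..m; z^{-1} applied via fps_shift 1).\<close>
primrec fsys :: "nat \<Rightarrow> (nat \<Rightarrow> complex fps) \<Rightarrow> nat \<Rightarrow> nat \<Rightarrow> complex fps" where
  "fsys m f 0 = f"
| "fsys m f (Suc n) =
     (let g = fsys m f n;
          a = (\<lambda>j. - fps_nth (g j) 0 / fps_nth (g (j - 1)) 0)
      in (\<lambda>j. if j < m then fps_shift 1 (g (Suc j) + fps_const (a (Suc j)) * g j)
              else if j = m then g 0 else 0))"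

definition cc :: "nat \<Rightarrow> (nat \<Rightarrow> complex fps) \<Rightarrow> nat \<Rightarrow> nat \<Rightarrow> complex" where
  "cc m f n j = fps_nth (fsys m f n j) 0"

definition acoef :: "nat \<Rightarrow> (nat \<Rightarrow> complex fps) \<Rightarrow> nat \<Rightarrow> nat \<Rightarrow> complex" where
  "acoef m f n j = - cc m f n j / cc m f n (j - 1)"

text \<open>The matrix M^[n], rows and columns indexed by 1..m+1.\<close>
definition Mmat :: "nat \<Rightarrow> (nat \<Rightarrow> complex fps) \<Rightarrow> nat \<Rightarrow> nat \<Rightarrow> nat \<Rightarrow> complex poly" where
  "Mmat m f n i t =
     (if i = 1 then (if t = m + 1 then [:0, 1:] else 0)
      else if 2 \<le> i \<and> i \<le> m + 1 then
        (if t = i - 1 then 1 else if t = i then [:acoef m f n (m + 2 - i):] else 0)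
      else 0)"

definition matmul :: "nat \<Rightarrow> (nat \<Rightarrow> nat \<Rightarrow> complex poly) \<Rightarrow> (nat \<Rightarrow> nat \<Rightarrow> complex poly)
                       \<Rightarrow> nat \<Rightarrow> nat \<Rightarrow> complex poly" where
  "matmul m P R i s = (\<Sum>t=1..m+1. P i t * R t s)"

primrec Amat :: "nat \<Rightarrow> (nat \<Rightarrow> complex fps) \<Rightarrow> nat \<Rightarrow> nat \<Rightarrow> nat \<Rightarrow> complex poly" where
  "Amat m f 0 = Mmat m f 0"
| "Amat m f (Suc n) = matmul m (Mmat m f (Suc n)) (Amat m f n)"

definition general_position :: "nat \<Rightarrow> (nat \<Rightarrow> complex fps) \<Rightarrow> bool" where
  "general_position m f =
     ((\<forall>n. \<forall>j\<le>m. cc m f n j \<noteq> 0) \<and>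
      (\<forall>n. \<forall>i\<in>{1..m+1}. \<forall>s\<in>{1..m+1}.
         pdeg (Amat m f (Suc n) i s) =
         Max ((\<lambda>t. pdeg (Mmat m f (Suc n) i t * Amat m f n t s)) ` {1..m+1})))"

end

theory Submission imports Defs begin

definition Edeg :: "nat \<Rightarrow> nat \<Rightarrow> nat \<Rightarrow> nat \<Rightarrow> ereal" where
"Edeg m N i s = (if int N + int s - int i \<ge> 0 \<and> (s \<le> i \<or> int N + int s - int i \<ge> int m + 1)
   \<and> \<not>(i = 1 \<and> s = 1 \<and> int N < int m + 1)
   then ereal (real_of_int ((int N + int s - int i) div (int m + 1))) else -\<infinity>)"

lemma Edeg_alt:
  assumes "int N + int s - int i = Z"
    and "(Z \<ge> 0 \<and> (s \<le> i \<or> Z \<ge> int m + 1) \<and> \<not>(i = 1 \<and> s = 1 \<and> int N < int m + 1)) = C"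
  shows "Edeg m N i s = (if C then ereal (real_of_int (Z div (int m + 1))) else -\<infinity>)"
  unfolding Edeg_def assms(1) assms(2) by (rule refl)

lemma E2:
  assumes "N \<ge> 1" "2 \<le> i" "i \<le> m+1" "1 \<le> s" "s \<le> m+1"
  shows "max (Edeg m N (i-1) s) (Edeg m N i s) = Edeg m (Suc N) i s"
proof -
  define X where "X = int N + int s - int i + 1"
  define V1 where "V1 = (X \<ge> 0 \<and> (s \<le> i - 1 \<or> X \<ge> int m + 1) \<and> \<not>(i = 2 \<and> s = 1 \<and> int N < int m + 1))"
  define V2 where "V2 = (X - 1 \<ge> 0 \<and> (s \<le> i \<or> X - 1 \<ge> int m + 1))"
  define V3 where "V3 = (X \<ge> 0 \<and> (s \<le> i \<or> X \<ge> int m + 1))"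
  have e1: "Edeg m N (i-1) s = (if V1 then ereal (real_of_int (X div (int m + 1))) else -\<infinity>)"
    apply (rule Edeg_alt)
    using assms unfolding X_def V1_def by linarith+
  have e2: "Edeg m N i s = (if V2 then ereal (real_of_int ((X - 1) div (int m + 1))) else -\<infinity>)"
    apply (rule Edeg_alt)
    using assms unfolding X_def V2_def by linarith+
  have e3: "Edeg m (Suc N) i s = (if V3 then ereal (real_of_int (X div (int m + 1))) else -\<infinity>)"
    apply (rule Edeg_alt)
    using assms unfolding X_def V3_def by linarith+
  have mono: "(X - 1) div (int m + 1) \<le> X div (int m + 1)"
    by (simp add: zdiv_mono1)
  have V: "V3 \<longleftrightarrow> V1 \<or> V2"
    using assms unfolding V1_def V2_def V3_def X_def by linarith
  have small: "X div (int m + 1) = (X - 1) div (int m + 1)" if "\<not> V1" "V2"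
  proof -
    have "X < int m + 1" "X \<ge> 1" using that assms unfolding V1_def V2_def X_def by linarith+
    then show ?thesis by (simp add: div_pos_pos_trivial)
  qed
  show ?thesis
  proof (cases V1)
    case True
    then show ?thesis unfolding e1 e2 e3 using V mono by (simp add: max_def)
  next
    case False
    then show ?thesis unfolding e1 e2 e3 using V small by (simp add: max_def)
  qed
qed

declare sum.cl_ivl_Suc[simp del] prod.cl_ivl_Suc[simp del] fsys.simps(2)[simp del]

lemma sum_two:
  fixes h :: "nat \<Rightarrow> 'a::comm_semiring_1"
  assumes "a \<noteq> b" "a \<in> S" "b \<in> S" "finite S"
  shows "(\<Sum>t\<in>S. (if t = a then x else if t = b then y else 0) * h t) = x * h a + y * h b"
proof -
  have "(\<Sum>t\<in>S. (if t = a then x else if t = b then y else 0) * h t)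
      = (\<Sum>t\<in>S. (if t = a then x * h a else 0) + (if t = b then y * h b else 0))"
    by (rule sum.cong) (use assms in auto)
  also have "\<dots> = x * h a + y * h b" by (simp add: sum.distrib assms)
  finally show ?thesis .
qed

lemma sum_one:
  fixes h :: "nat \<Rightarrow> 'a::comm_semiring_1"
  assumes "a \<in> S" "finite S"
  shows "(\<Sum>t\<in>S. (if t = a then x else 0) * h t) = x * h a"
proof -
  have "(\<Sum>t\<in>S. (if t = a then x else 0) * h t) = (\<Sum>t\<in>S. (if t = a then x * h a else 0))"
    by (rule sum.cong) auto
  then show ?thesis by (simp add: assms)
qed

lemma Mmat_1: "Mmat m f n 1 t = (if t = m+1 then [:0,1:] else 0)"
  by (simp add: Mmat_def)

lemma Mmat_i: "2 \<le> i \<Longrightarrow> i \<le> m+1 \<Longrightarrow>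
   Mmat m f n i t = (if t = i - 1 then 1 else if t = i then [:acoef m f n (m + 2 - i):] else 0)"
  by (simp add: Mmat_def)

lemma matmul_1: "matmul m (Mmat m f n) B 1 s = [:0,1:] * B (m+1) s"
  unfolding matmul_def Mmat_1 by (rule sum_one) auto

lemma matmul_i: "2 \<le> i \<Longrightarrow> i \<le> m+1 \<Longrightarrow>
   matmul m (Mmat m f n) B i s = B (i-1) s + [:acoef m f n (m + 2 - i):] * B i s"
  unfolding matmul_def
  apply (subst Mmat_i, assumption, assumption)
  apply (subst sum_two)
  by auto

lemma fps_M_1: "(\<Sum>t=1..m+1. fps_of_poly (Mmat m f n 1 t) * h t) = fps_X * h (m+1)"
proof -
  have "(\<Sum>t=1..m+1. fps_of_poly (Mmat m f n 1 t) * h t) = (\<Sum>t=1..m+1. (if t = m+1 then fps_X else 0) * h t)"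
    by (rule sum.cong[OF refl]) (simp add: Mmat_def)
  also have "\<dots> = fps_X * h (m+1)" by (rule sum_one) auto
  finally show ?thesis .
qed

lemma fps_M_i: "2 \<le> i \<Longrightarrow> i \<le> m+1 \<Longrightarrow>
   (\<Sum>t=1..m+1. fps_of_poly (Mmat m f n i t) * h t) = h (i-1) + fps_const (acoef m f n (m + 2 - i)) * h i"
proof -
  assume a: "2 \<le> i" "i \<le> m+1"
  have "(\<Sum>t=1..m+1. fps_of_poly (Mmat m f n i t) * h t)
     = (\<Sum>t=1..m+1. (if t = i - 1 then 1 else if t = i then fps_const (acoef m f n (m + 2 - i)) else 0) * h t)"
    by (rule sum.cong) (auto simp: Mmat_i[OF a] fps_of_poly_const)
  also have "\<dots> = h (i-1) + fps_const (acoef m f n (m + 2 - i)) * h i"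
    by (subst sum_two) (use a in auto)
  finally show ?thesis .
qed

lemma fsys_top: "fsys m f (Suc n) m = fsys m f n 0"
  by (simp add: Let_def fsys.simps(2))

lemma fsys_low:
  assumes "j < m" "cc m f n j \<noteq> 0"
  shows "fps_X * fsys m f (Suc n) j = fsys m f n (Suc j) + fps_const (acoef m f n (Suc j)) * fsys m f n j"
proof -
  define g where "g = fsys m f n (Suc j) + fps_const (acoef m f n (Suc j)) * fsys m f n j"
  have g0: "g $ 0 = 0" using assms(2) unfolding g_def acoef_def cc_def by (simp add: field_simps)
  have "fsys m f (Suc n) j = fps_shift 1 g"
    using assms(1) unfolding g_def acoef_def cc_def by (simp add: Let_def fsys.simps(2))
  moreover have "fps_X * fps_shift 1 g = g"
    by (rule fps_ext) (use g0 in auto)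
  ultimately show ?thesis unfolding g_def by simp
qed

lemma vec_step:
  assumes cc: "\<forall>j\<le>m. cc m f n j \<noteq> 0" and i: "1 \<le> i" "i \<le> m+1"
  shows "(\<Sum>t=1..m+1. fps_of_poly (Mmat m f n i t) * fsys m f n (m+1-t)) = fps_X * fsys m f (Suc n) (m+1-i)"
proof (cases "i = 1")
  case True
  then show ?thesis unfolding True fps_M_1 by (simp add: fsys_top)
next
  case False
  then have a: "2 \<le> i" "i \<le> m+1" using i by auto
  have e1: "m + 1 - (i - 1) = Suc (m+1-i)" using a by auto
  have e2: "m + 2 - i = Suc (m+1-i)" using a by auto
  show ?thesis
    unfolding fps_M_i[OF a] e1 e2
    by (rule fsys_low[symmetric]) (use a cc in auto)
qed

lemma vec_main:
  assumes cc: "\<forall>n. \<forall>j\<le>m. cc m f n j \<noteq> 0"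
  shows "1 \<le> i \<Longrightarrow> i \<le> m+1 \<Longrightarrow>
    (\<Sum>s=1..m+1. fps_of_poly (Amat m f n i s) * f (m+1-s)) = fps_X ^ Suc n * fsys m f (Suc n) (m+1-i)"
proof (induction n arbitrary: i)
  case 0
  then show ?case using vec_step[of m f 0 i] cc by simp
next
  case (Suc n)
  have "(\<Sum>s=1..m+1. fps_of_poly (Amat m f (Suc n) i s) * f (m+1-s))
      = (\<Sum>s=1..m+1. \<Sum>t=1..m+1. fps_of_poly (Mmat m f (Suc n) i t) * (fps_of_poly (Amat m f n t s) * f (m+1-s)))"
    by (simp add: matmul_def fps_of_poly_sum fps_of_poly_mult sum_distrib_right mult.assoc)
  also have "\<dots> = (\<Sum>t=1..m+1. fps_of_poly (Mmat m f (Suc n) i t) * (\<Sum>s=1..m+1. fps_of_poly (Amat m f n t s) * f (m+1-s)))"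
    by (subst sum.swap) (simp add: sum_distrib_left)
  also have "\<dots> = (\<Sum>t=1..m+1. fps_of_poly (Mmat m f (Suc n) i t) * (fps_X ^ Suc n * fsys m f (Suc n) (m+1-t)))"
    by (rule sum.cong[OF refl], subst Suc.IH) auto
  also have "\<dots> = fps_X ^ Suc n * (\<Sum>t=1..m+1. fps_of_poly (Mmat m f (Suc n) i t) * fsys m f (Suc n) (m+1-t))"
    by (simp add: sum_distrib_left mult.left_commute)
  also have "\<dots> = fps_X ^ Suc n * (fps_X * fsys m f (Suc (Suc n)) (m+1-i))"
    using vec_step[of m f "Suc n" i] cc Suc.prems by simp
  finally show ?case by (simp add: mult.assoc)
qed

lemma bigO_main:
  assumes cc: "\<forall>n. \<forall>j\<le>m. cc m f n j \<noteq> 0"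
  shows "bigO_z (\<Sum>j\<le>m. fps_of_poly (Amat m f n (m + 1) (m + 1 - j)) * f j) (n + 1)"
proof -
  have "(\<Sum>j\<le>m. fps_of_poly (Amat m f n (m + 1) (m + 1 - j)) * f j)
      = (\<Sum>s=1..m+1. fps_of_poly (Amat m f n (m+1) s) * f (m+1-s))"
    by (rule sum.reindex_bij_witness[where i = "\<lambda>s. m+1-s" and j = "\<lambda>j. m+1-j"]) auto
  also have "\<dots> = fps_X ^ Suc n * fsys m f (Suc n) 0"
    using vec_main[OF cc, of "m+1" n] by simp
  finally have eq: "(\<Sum>j\<le>m. fps_of_poly (Amat m f n (m + 1) (m + 1 - j)) * f j) = fps_X ^ Suc n * fsys m f (Suc n) 0" .
  show ?thesis unfolding bigO_z_def eq fps_X_power_mult_nth by simp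
qed


lemma E1:
  assumes "N \<ge> 1" "1 \<le> s" "s \<le> m+1"
  shows "Edeg m (Suc N) 1 s = Edeg m N (m+1) s + 1"
proof -
  define Y where "Y = int N + int s - int (m+1)"
  have L: "Edeg m (Suc N) 1 s = (if Y \<ge> 0 then ereal (real_of_int ((Y + (int m + 1)) div (int m + 1))) else -\<infinity>)"
    apply (rule Edeg_alt)
    using assms unfolding Y_def by linarith+
  have R: "Edeg m N (m+1) s = (if Y \<ge> 0 then ereal (real_of_int (Y div (int m + 1))) else -\<infinity>)"
    apply (rule Edeg_alt)
    using assms unfolding Y_def by linarith+
  have d: "(Y + (int m + 1)) div (int m + 1) = Y div (int m + 1) + 1"
    by simp
  have p: "\<And>a. ereal a + 1 = ereal (a + 1)" by (metis one_ereal_def plus_ereal.simps(1))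
  show ?thesis unfolding L R d by (cases "Y \<ge> 0") (simp_all add: p)
qed

lemma E0:
  assumes "1 \<le> i" "i \<le> m+1" "1 \<le> s" "s \<le> m+1"
  shows "Edeg m 1 i s = (if i = 1 then (if s = m+1 then 1 else -\<infinity>)
                        else if s = i - 1 \<or> s = i then 0 else -\<infinity>)"
proof (cases "i = 1")
  case True
  have "Edeg m 1 i s = (if s = m+1 then ereal (real_of_int ((int s) div (int m + 1))) else -\<infinity>)"
    apply (rule Edeg_alt)
    using assms True by linarith+
  moreover have "(1 + int m) div (int m + 1) = 1" by (simp add: add.commute)
  ultimately show ?thesis using True by auto
next
  case False
  have "Edeg m 1 i s = (if s = i - 1 \<or> s = i then ereal (real_of_int ((1 + int s - int i) div (int m + 1))) else -\<infinity>)"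
    apply (rule Edeg_alt)
    using assms False by linarith+
  moreover have "s = i - 1 \<or> s = i \<Longrightarrow> (1 + int s - int i) div (int m + 1) = 0"
    using assms False by (auto intro: div_pos_pos_trivial)
  ultimately show ?thesis using False by (auto simp: zero_ereal_def)
qed

lemma Efinal:
  assumes "n + 1 = m + (m + 1) * k + l" "l \<le> m" "j \<le> m"
  shows "Edeg m (Suc n) (m+1) (m+1-j) = ereal (real (if j < l then k + 1 else k))"
proof -
  have jn: "j \<le> n + 1" using assms by linarith
  have e: "Edeg m (Suc n) (m+1) (m+1-j) = (if True then ereal (real_of_int ((int (n+1) - int j) div (int m + 1))) else -\<infinity>)"
    apply (rule Edeg_alt)
     apply (simp add: jn assms(3) of_nat_diff)
    apply (cases "m = 0")
     apply (use jn assms(3) in auto)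
    done
  show ?thesis
  proof (cases "j < l")
    case True
    have "int (n+1) - int j = int (l - 1 - j) + (int m + 1) * int (k+1)"
      using assms True by (simp add: algebra_simps)
    moreover have "int (l - 1 - j) < int m + 1" using assms by linarith
    ultimately have "(int (n+1) - int j) div (int m + 1) = int (k+1)"
      by (simp add: div_pos_pos_trivial)
    then show ?thesis using e True by simp
  next
    case False
    have "int (n+1) - int j = int (m + l - j) + (int m + 1) * int k"
      using assms False by (simp add: algebra_simps)
    moreover have "int (m + l - j) < int m + 1" using assms False by linarith
    ultimately have "(int (n+1) - int j) div (int m + 1) = int k"
      by (simp add: div_pos_pos_trivial)
    then show ?thesis using e False by simp
  qed
qed

lemma pdeg_0[simp]: "pdeg 0 = -\<infinity>" by (simp add: pdeg_def)
lemma pdeg_1[simp]: "pdeg 1 = 0" by (simp add: pdeg_def)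
lemma pdeg_X: "pdeg [:0, 1:] = 1" by (simp add: pdeg_def)
lemma pdeg_const: "c \<noteq> 0 \<Longrightarrow> pdeg [:c:] = 0" by (simp add: pdeg_def)
lemma pdeg_minf_plus[simp]: "-\<infinity> + pdeg p = -\<infinity>" by (simp add: pdeg_def)
lemma pdeg_mult: "pdeg (p * q) = pdeg p + pdeg q"
  by (cases "p = 0"; cases "q = 0") (simp_all add: pdeg_def degree_mult_eq)

lemma acoef_nz:
  assumes cc: "\<forall>n. \<forall>j\<le>m. cc m f n j \<noteq> 0" and "2 \<le> i" "i \<le> m+1"
  shows "acoef m f n (m + 2 - i) \<noteq> 0"
proof -
  have "m + 2 - i \<le> m" "m + 2 - i - 1 \<le> m" using assms by auto
  then have "cc m f n (m + 2 - i) \<noteq> 0" "cc m f n (m + 2 - i - 1) \<noteq> 0" using cc by blast+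
  then show ?thesis unfolding acoef_def by simp
qed

lemma Max_row:
  assumes "2 \<le> i" "i \<le> m+1" "acoef m f n (m + 2 - i) \<noteq> 0"
  shows "Max ((\<lambda>t. pdeg (Mmat m f n i t * B t)) ` {1..m+1}) = max (pdeg (B (i-1))) (pdeg (B i))"
proof (rule Max_eqI)
  show "finite ((\<lambda>t. pdeg (Mmat m f n i t * B t)) ` {1..m+1})" by simp
next
  fix y assume "y \<in> (\<lambda>t. pdeg (Mmat m f n i t * B t)) ` {1..m+1}"
  then obtain t where y: "y = pdeg (Mmat m f n i t * B t)" by auto
  show "y \<le> max (pdeg (B (i-1))) (pdeg (B i))"
    using assms unfolding y Mmat_i[OF assms(1,2)]
    by (auto simp: pdeg_mult pdeg_const)
next
  have a: "pdeg (Mmat m f n i (i-1) * B (i-1)) = pdeg (B (i-1))"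
    using assms by (simp add: Mmat_i)
  have b: "pdeg (Mmat m f n i i * B i) = pdeg (B i)"
    using assms by (simp add: Mmat_i pdeg_mult pdeg_const)
  have i1: "i - 1 \<in> {1..m+1}" "i \<in> {1..m+1}" using assms by auto
  show "max (pdeg (B (i-1))) (pdeg (B i)) \<in> (\<lambda>t. pdeg (Mmat m f n i t * B t)) ` {1..m+1}"
  proof (cases "pdeg (B (i-1)) \<le> pdeg (B i)")
    case True
    then show ?thesis using b i1 by (auto simp: max_def intro!: image_eqI[where x = i])
  next
    case False
    then show ?thesis using a i1 by (auto simp: max_def intro!: image_eqI[where x = "i-1"])
  qed
qed

lemma deg_main:
  assumes gp: "general_position m f"
  shows "1 \<le> i \<Longrightarrow> i \<le> m+1 \<Longrightarrow> 1 \<le> s \<Longrightarrow> s \<le> m+1 \<Longrightarrow>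
     pdeg (Amat m f n i s) = Edeg m (Suc n) i s"
proof (induction n arbitrary: i s)
  case 0
  have cc: "\<forall>n. \<forall>j\<le>m. cc m f n j \<noteq> 0" using gp unfolding general_position_def by blast
  show ?case
  proof (cases "i = 1")
    case True
    then show ?thesis using 0 E0[of 1 m s] by (simp add: Mmat_def pdeg_X)
  next
    case False
    then have "2 \<le> i" using 0 by simp
    then show ?thesis using 0 False acoef_nz[OF cc, of i 0] E0[of i m s]
      by (simp add: Mmat_i pdeg_const)
  qed
next
  case (Suc n)
  have cc: "\<forall>n. \<forall>j\<le>m. cc m f n j \<noteq> 0" using gp unfolding general_position_def by blast
  show ?case
  proof (cases "i = 1")
    case True
    have A1: "Amat m f (Suc n) 1 s = [:0,1:] * Amat m f n (m+1) s"
      by (simp only: Amat.simps matmul_1)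
    have "pdeg (Amat m f (Suc n) i s) = pdeg ([:0,1:] * Amat m f n (m+1) s)"
      unfolding True A1 ..
    also have "\<dots> = 1 + Edeg m (Suc n) (m+1) s"
      unfolding pdeg_mult pdeg_X using Suc.IH[of "m+1" s] Suc.prems by simp
    also have "\<dots> = Edeg m (Suc (Suc n)) i s"
      using True E1[of "Suc n" s m] Suc.prems by (simp add: add.commute)
    finally show ?thesis .
  next
    case False
    then have i2: "2 \<le> i" using Suc.prems by simp
    have "pdeg (Amat m f (Suc n) i s) =
         Max ((\<lambda>t. pdeg (Mmat m f (Suc n) i t * Amat m f n t s)) ` {1..m+1})"
      using gp Suc.prems unfolding general_position_def by auto
    also have "\<dots> = max (pdeg (Amat m f n (i-1) s)) (pdeg (Amat m f n i s))"
      by (rule Max_row[OF i2 Suc.prems(2) acoef_nz[OF cc i2 Suc.prems(2)]])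
    also have "\<dots> = max (Edeg m (Suc n) (i-1) s) (Edeg m (Suc n) i s)"
      using Suc.prems i2 by (simp add: Suc.IH)
    also have "\<dots> = Edeg m (Suc (Suc n)) i s"
      using E2[of "Suc n" i m s] Suc.prems i2 by simp
    finally show ?thesis .
  qed
qed


lemma pdeg_fin: "pdeg p = ereal (real d) \<Longrightarrow> p \<noteq> 0 \<and> degree p = d"
  by (cases "p = 0") (auto simp: pdeg_def)

lemma sum_ind:
  assumes "l \<le> m"
  shows "(\<Sum>j\<le>m. if j < l then k + 1 else k) = (m + 1) * k + (l::nat)"
proof -
  have "(\<Sum>j\<le>m. if j < l then k + 1 else k) = (\<Sum>j\<le>m. k + (if j < l then 1 else 0))"
    by (rule sum.cong) auto
  also have "\<dots> = (m + 1) * k + (\<Sum>j\<le>m. (if j < l then 1 else 0))"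
    by (simp add: sum.distrib)
  also have "(\<Sum>j\<le>m. (if j < l then 1 else 0)) = (\<Sum>j\<in>{..<l}. (1::nat))"
    by (rule sum.mono_neutral_cong_right) (use assms in auto)
  finally show ?thesis by simp
qed

theorem theorem3:
  fixes m n k l :: nat and f :: "nat \<Rightarrow> complex fps"
  assumes gp: "general_position m f"
    and nk: "n + 1 = m + (m + 1) * k + l"
    and l: "l \<le> m"
  shows "(l = 0 \<longrightarrow>
            (\<forall>s\<in>{1..m+1}. pdeg (Amat m f n (m + 1) s) = ereal (real k)) \<and>
            hp_typeI m f (\<lambda>_. k) (\<lambda>j. Amat m f n (m + 1) (m + 1 - j)) \<and>
            (\<Sum>j\<le>m. k) + m = n + 1 \<and>
            bigO_z (\<Sum>j\<le>m. fps_of_poly (Amat m f n (m + 1) (m + 1 - j)) * f j) (n + 1))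
       \<and> (1 \<le> l \<longrightarrow>
            (\<forall>s<l. pdeg (Amat m f n (m + 1) (m + 1 - s)) = ereal (real (k + 1))) \<and>
            (\<forall>s\<in>{l..m}. pdeg (Amat m f n (m + 1) (m + 1 - s)) = ereal (real k)) \<and>
            hp_typeI m f (\<lambda>j. if j < l then k + 1 else k) (\<lambda>j. Amat m f n (m + 1) (m + 1 - j)) \<and>
            (\<Sum>j\<le>m. if j < l then k + 1 else k) + m = n + 1 \<and>
            bigO_z (\<Sum>j\<le>m. fps_of_poly (Amat m f n (m + 1) (m + 1 - j)) * f j) (n + 1))"
proof -
  have cc: "\<forall>n. \<forall>j\<le>m. cc m f n j \<noteq> 0" using gp unfolding general_position_def by blast
  have big: "bigO_z (\<Sum>j\<le>m. fps_of_poly (Amat m f n (m + 1) (m + 1 - j)) * f j) (n + 1)"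
    by (rule bigO_main[OF cc])
  define kk where "kk = (\<lambda>j::nat. if j < l then k + 1 else k)"
  have deg: "pdeg (Amat m f n (m + 1) (m + 1 - j)) = ereal (real (kk j))" if "j \<le> m" for j
    using deg_main[OF gp, of "m+1" "m+1-j" n] Efinal[OF nk l that] that unfolding kk_def by simp
  have Q: "Amat m f n (m + 1) (m + 1 - j) \<noteq> 0 \<and> degree (Amat m f n (m + 1) (m + 1 - j)) = kk j"
    if "j \<le> m" for j using pdeg_fin[OF deg[OF that]] .
  have sumk: "(\<Sum>j\<le>m. kk j) + m = n + 1"
    unfolding kk_def using sum_ind[OF l, of k] nk by simp
  have hp: "hp_typeI m f kk (\<lambda>j. Amat m f n (m + 1) (m + 1 - j))"
    unfolding hp_typeI_def sumk using Q big by auto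
  have part1: "l = 0 \<longrightarrow>
            (\<forall>s\<in>{1..m+1}. pdeg (Amat m f n (m + 1) s) = ereal (real k)) \<and>
            hp_typeI m f (\<lambda>_. k) (\<lambda>j. Amat m f n (m + 1) (m + 1 - j)) \<and>
            (\<Sum>j\<le>m. k) + m = n + 1 \<and>
            bigO_z (\<Sum>j\<le>m. fps_of_poly (Amat m f n (m + 1) (m + 1 - j)) * f j) (n + 1)"
  proof
    assume l0: "l = 0"
    have kk0: "kk = (\<lambda>_. k)" unfolding kk_def l0 by simp
    have "pdeg (Amat m f n (m + 1) s) = ereal (real k)" if "s \<in> {1..m+1}" for s
    proof -
      have "m + 1 - (m + 1 - s) = s" "m + 1 - s \<le> m" using that by auto
      then show ?thesis using deg[of "m + 1 - s"] kk0 by simp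
    qed
    then show "(\<forall>s\<in>{1..m+1}. pdeg (Amat m f n (m + 1) s) = ereal (real k)) \<and>
            hp_typeI m f (\<lambda>_. k) (\<lambda>j. Amat m f n (m + 1) (m + 1 - j)) \<and>
            (\<Sum>j\<le>m. k) + m = n + 1 \<and>
            bigO_z (\<Sum>j\<le>m. fps_of_poly (Amat m f n (m + 1) (m + 1 - j)) * f j) (n + 1)"
      using hp sumk big unfolding kk0 by blast
  qed
  have part2: "1 \<le> l \<longrightarrow>
            (\<forall>s<l. pdeg (Amat m f n (m + 1) (m + 1 - s)) = ereal (real (k + 1))) \<and>
            (\<forall>s\<in>{l..m}. pdeg (Amat m f n (m + 1) (m + 1 - s)) = ereal (real k)) \<and>
            hp_typeI m f (\<lambda>j. if j < l then k + 1 else k) (\<lambda>j. Amat m f n (m + 1) (m + 1 - j)) \<and>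
            (\<Sum>j\<le>m. if j < l then k + 1 else k) + m = n + 1 \<and>
            bigO_z (\<Sum>j\<le>m. fps_of_poly (Amat m f n (m + 1) (m + 1 - j)) * f j) (n + 1)"
  proof
    have a: "\<forall>s<l. pdeg (Amat m f n (m + 1) (m + 1 - s)) = ereal (real (k + 1))"
    proof (intro allI impI)
      fix s assume "s < l"
      then show "pdeg (Amat m f n (m + 1) (m + 1 - s)) = ereal (real (k + 1))"
        using deg[of s] l unfolding kk_def by simp
    qed
    have b: "\<forall>s\<in>{l..m}. pdeg (Amat m f n (m + 1) (m + 1 - s)) = ereal (real k)"
    proof
      fix s assume "s \<in> {l..m}"
      then show "pdeg (Amat m f n (m + 1) (m + 1 - s)) = ereal (real k)"
        using deg[of s] unfolding kk_def by simp
    qed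
    show "(\<forall>s<l. pdeg (Amat m f n (m + 1) (m + 1 - s)) = ereal (real (k + 1))) \<and>
            (\<forall>s\<in>{l..m}. pdeg (Amat m f n (m + 1) (m + 1 - s)) = ereal (real k)) \<and>
            hp_typeI m f (\<lambda>j. if j < l then k + 1 else k) (\<lambda>j. Amat m f n (m + 1) (m + 1 - j)) \<and>
            (\<Sum>j\<le>m. if j < l then k + 1 else k) + m = n + 1 \<and>
            bigO_z (\<Sum>j\<le>m. fps_of_poly (Amat m f n (m + 1) (m + 1 - j)) * f j) (n + 1)"
      using a b hp sumk big unfolding kk_def by blast
  qed
  show ?thesis using part1 part2 by blast
qed

end
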